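(* Let $r(x)$ be a meromorphic function on $\mathbb C$, not identically zero, all of whose zeros $x_k$ and all of whose poles $y_\ell$ are simple, and let $q(x)=1/r(x)$. Consider the system $$\frac{dW(x,\rho)}{dx}=\rho\begin{pmatrix}0& r(x)^{-2}\\ r(x)^2&0\end{pmatrix}W(x,\rho).$$ Then for every $\rho\in\mathbb C$ every zero and every pole of $r$ is a strong regular point of this system (i.e. the fundamental solution is global strong regular, hence meromorphic in $x$ on $\mathbb C$) if and only if $$r''(x_k)=0\ \text{for every zero } x_k \text{ of } r,\qquad q''(y_\ell)=0\ \text{for every zero } y_\ell \text{ of } q.$$
   Context: For a system $\frac{dW}{dx}=A(x)W$ with $A$ holomorphic and single-valued in a punctured disc around $x_0$, every fundamental (invertible matrix) solution has the form $W(x)=S(x)(x-x_0)^{\Phi}$ with $S$ holomorphic and single-valued in the punctured disc and $\Phi$ a constant matrix. The point $x_0$ is called strong regular for the system if a fundamental solution $W$ is single-valued in the punctured disc and has at most a pole at $x_0$, i.e. $W(x)=\sum_{k\ge m}b_k(x-x_0)^k$ for some $m\in\mathbb Z$. A fundamental solution is called global strong regular if it is strong regular at every singular point of $A$. *)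

theory Defs
  imports "HOL-Analysis.Analysis" "HOL-Complex_Analysis.Complex_Analysis"
begin

definition strong_regular_point :: "(complex \<Rightarrow> complex^2^2) \<Rightarrow> complex \<Rightarrow> bool" where
  "strong_regular_point A x0 \<longleftrightarrow>
     (\<exists>\<epsilon>>0. \<exists>W :: complex \<Rightarrow> complex^2^2.
        (\<forall>i j. (\<lambda>x. A x $ i $ j) holomorphic_on (ball x0 \<epsilon> - {x0})) \<and>
        (\<forall>x\<in>ball x0 \<epsilon> - {x0}. det (W x) \<noteq> 0 \<and>
            (\<forall>i j. ((\<lambda>y. W y $ i $ j) has_field_derivative ((A x ** W x) $ i $ j)) (at x))) \<and>
        (\<forall>i j. not_essential (\<lambda>x. W x $ i $ j) x0))"

definition sysA :: "(complex \<Rightarrow> complex) \<Rightarrow> complex \<Rightarrow> complex \<Rightarrow> complex^2^2" where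
  "sysA r \<rho> x = vector [vector [0, \<rho> * inverse ((r x)^2)], vector [\<rho> * (r x)^2, 0]]"

end

theory Submission
  imports Defs
begin

lemma prim_ball:
  fixes f :: "complex \<Rightarrow> complex"
  assumes holf: "f holomorphic_on ball a R" and x: "x \<in> ball a R"
  shows "((\<lambda>x. contour_integral (linepath a x) f) has_field_derivative f x) (at x)"
proof (rule triangle_contour_integrals_starlike_primitive[where S="ball a R"])
  show "continuous_on (ball a R) f" using holf holomorphic_on_imp_continuous_on by blast
  show "a \<in> ball a R" using x by (metis centre_in_ball dist_commute ex_in_conv mem_ball empty_iff ball_eq_empty not_le)
  show "open (ball a R)" by simp
  show "x \<in> ball a R" by fact
  show "closed_segment a y \<subseteq> ball a R" if "y \<in> ball a R" for y
    using \<open>a \<in> ball a R\<close> that convex_ball convex_contains_segment by blast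
  fix b c assume bc: "closed_segment b c \<subseteq> ball a R"
  have "convex hull {a, b, c} \<subseteq> ball a R"
    using bc \<open>a \<in> ball a R\<close> by (intro hull_minimal) (auto simp: convex_ball)
  then have "(f has_contour_integral 0) (linepath a b +++ linepath b c +++ linepath c a)"
    by (intro Cauchy_theorem_triangle holomorphic_on_subset[OF holf])
  then show "contour_integral (linepath a b) f + contour_integral (linepath b c) f +
                       contour_integral (linepath c a) f = 0"
    by (rule has_chain_integral_chain_integral3)
qed

lemma holo_of_deriv:
  assumes "\<And>x. x \<in> S \<Longrightarrow> (f has_field_derivative f' x) (at x)"
  shows "f holomorphic_on S"
  using assms unfolding holomorphic_on_def field_differentiable_def
  by (meson has_field_derivative_at_within)

lemma ci_bound:
  fixes f :: "complex \<Rightarrow> complex"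
  assumes holf: "f holomorphic_on ball x0 R" and e: "e < R" and x: "x \<in> cball x0 e"
    and B: "\<And>w. w \<in> cball x0 e \<Longrightarrow> norm (f w) \<le> B"
  shows "norm (contour_integral (linepath x0 x) f) \<le> B * e"
proof -
  have seg: "closed_segment x0 x \<subseteq> cball x0 e"
    using x by (intro closed_segment_subset) (auto simp: convex_cball, meson zero_le_dist order_trans)
  have sub: "cball x0 e \<subseteq> ball x0 R" using e by auto
  have "f contour_integrable_on linepath x0 x"
    by (rule contour_integrable_holomorphic_simple[OF holf]) (use seg sub in auto)
  then have hi: "(f has_contour_integral contour_integral (linepath x0 x) f) (linepath x0 x)"
    by (rule has_contour_integral_integral)
  have x0: "x0 \<in> cball x0 e" using x by (auto simp: dist_commute) (meson dist_not_less_zero le_less_trans not_le zero_le_dist order_trans)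
  have B0: "0 \<le> B" using B[OF x0] norm_ge_zero order_trans by blast
  have "norm (contour_integral (linepath x0 x) f) \<le> B * norm (x - x0)"
    by (rule has_contour_integral_bound_linepath[OF hi B0]) (use seg B in auto)
  also have "\<dots> \<le> B * e" using x B0 by (intro mult_left_mono) (auto simp: dist_norm norm_minus_commute)
  finally show ?thesis .
qed

lemma ci_diff:
  fixes f g :: "complex \<Rightarrow> complex"
  assumes "f holomorphic_on ball x0 R" "g holomorphic_on ball x0 R" "x \<in> ball x0 R"
  shows "contour_integral (linepath x0 x) f - contour_integral (linepath x0 x) g
       = contour_integral (linepath x0 x) (\<lambda>w. f w - g w)"
proof -
  have seg: "closed_segment x0 x \<subseteq> ball x0 R"
    using assms(3) by (intro closed_segment_subset) (auto simp: convex_ball, meson zero_le_dist le_less_trans)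
  have "f contour_integrable_on linepath x0 x" "g contour_integrable_on linepath x0 x"
    by (rule contour_integrable_holomorphic_simple[OF assms(1)], (use seg in auto))
       (rule contour_integrable_holomorphic_simple[OF assms(2)], (use seg in auto))
  then show ?thesis by (simp add: contour_integral_diff)
qed

lemma uniform_limit_mult_bounded:
  fixes f :: "nat \<Rightarrow> complex \<Rightarrow> complex"
  assumes ul: "uniform_limit S f l sequentially" and M: "\<And>w. w \<in> S \<Longrightarrow> norm (p w) \<le> M"
  shows "uniform_limit S (\<lambda>n w. p w * f n w) (\<lambda>w. p w * l w) sequentially"
proof (rule uniform_limitI)
  fix e :: real assume e: "e > 0"
  have "e / (abs M + 1) > 0" using e by simp
  from uniform_limitD[OF ul this]
  show "\<forall>\<^sub>F n in sequentially. \<forall>x\<in>S. dist (p x * f n x) (p x * l x) < e"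
  proof eventually_elim
    case (elim n)
    show ?case
    proof
      fix x assume x: "x \<in> S"
      have "dist (p x * f n x) (p x * l x) = norm (p x) * dist (f n x) (l x)"
        by (simp add: dist_norm norm_mult[symmetric] right_diff_distrib)
      also have "\<dots> \<le> (abs M + 1) * dist (f n x) (l x)"
        using M[OF x] by (intro mult_right_mono) auto
      also have "\<dots> < (abs M + 1) * (e / (abs M + 1))"
        using elim x by (intro mult_strict_left_mono) auto
      also have "\<dots> = e" by simp
      finally show "dist (p x * f n x) (p x * l x) < e" .
    qed
  qed
qed

fun picard :: "(complex\<Rightarrow>complex) \<Rightarrow> complex \<Rightarrow> complex \<Rightarrow> complex \<Rightarrow> nat \<Rightarrow> (complex\<Rightarrow>complex)\<times>(complex\<Rightarrow>complex)" where
  "picard p x0 a b 0 = ((\<lambda>x. a), (\<lambda>x. b))"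
| "picard p x0 a b (Suc n) =
     ((\<lambda>x. a + contour_integral (linepath x0 x) (snd (picard p x0 a b n))),
      (\<lambda>x. b + contour_integral (linepath x0 x) (\<lambda>w. p w * fst (picard p x0 a b n) w)))"

lemma prim_holo:
  fixes f :: "complex \<Rightarrow> complex"
  assumes "f holomorphic_on ball a R"
  shows "(\<lambda>x. contour_integral (linepath a x) f) holomorphic_on ball a R"
  by (rule holo_of_deriv[where f'=f]) (rule prim_ball[OF assms])

lemma ode_exists:
  fixes p :: "complex \<Rightarrow> complex"
  assumes holp: "p holomorphic_on ball x0 R" and R: "R > 0"
  shows "\<exists>e>0. \<exists>y z. y holomorphic_on ball x0 e \<and> z holomorphic_on ball x0 e \<and> y x0 = a \<and> z x0 = b \<and>
     (\<forall>x\<in>ball x0 e. (y has_field_derivative z x) (at x) \<and> (z has_field_derivative p x * y x) (at x))"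
proof -
  define Y where "Y n = fst (picard p x0 a b n)" for n
  define Z where "Z n = snd (picard p x0 a b n)" for n
  have Y0: "Y 0 = (\<lambda>x. a)" and Z0: "Z 0 = (\<lambda>x. b)" by (simp_all add: Y_def Z_def)
  have YS: "Y (Suc n) = (\<lambda>x. a + contour_integral (linepath x0 x) (Z n))" for n by (simp add: Y_def Z_def)
  have ZS: "Z (Suc n) = (\<lambda>x. b + contour_integral (linepath x0 x) (\<lambda>w. p w * Y n w))" for n
    by (simp add: Y_def Z_def)
  have hol: "Y n holomorphic_on ball x0 R \<and> Z n holomorphic_on ball x0 R" for n
  proof (induction n)
    case 0 show ?case by (simp add: Y0 Z0)
  next
    case (Suc n)
    then show ?case unfolding YS ZS
      by (intro conjI holomorphic_intros prim_holo holp) auto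
  qed
  have sub2: "cball x0 (R/2) \<subseteq> ball x0 R" using R by auto
  obtain M where M0: "M \<ge> 0" and M: "\<And>w. w \<in> cball x0 (R/2) \<Longrightarrow> norm (p w) \<le> M"
    using continuous_on_compact_bound[of "cball x0 (R/2)" p]
      holomorphic_on_imp_continuous_on[OF holomorphic_on_subset[OF holp sub2]] by auto
  define e where "e = min (R/2) (1/(2*(M+1)))"
  have e0: "e > 0" using R M0 by (simp add: e_def)
  have eR2: "e \<le> R/2" by (simp add: e_def)
  have eR: "e < R" using eR2 R by simp
  have eM1: "e * (M+1) \<le> 1/2"
  proof -
    have "e \<le> 1/(2*(M+1))" by (simp add: e_def)
    then have "e * (M+1) \<le> 1/(2*(M+1)) * (M+1)" using M0 by (intro mult_right_mono) auto
    also have "\<dots> = 1/2" using M0 by simp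
    finally show ?thesis .
  qed
  have eMe: "e * (M+1) = e * M + e" by (simp add: distrib_left)
  have eM0: "e * M \<ge> 0" using e0 M0 by simp
  have eM: "e * M \<le> 1/2" using eM1 eMe e0 by linarith
  have eh: "e \<le> 1/2" using eM1 eMe eM0 by linarith
  have subc: "cball x0 e \<subseteq> ball x0 R" using eR by auto
  have Mc: "norm (p w) \<le> M" if "w \<in> cball x0 e" for w using M that eR2 by auto
  define K where "K = norm a + norm b"
  have K0: "K \<ge> 0" by (simp add: K_def)
  have bnd: "\<forall>x\<in>cball x0 e. norm (Y (Suc n) x - Y n x) \<le> K * (1/2)^n \<and> norm (Z (Suc n) x - Z n x) \<le> K * (1/2)^n" for n
  proof (induction n)
    case 0
    show ?case
    proof
      fix x assume x: "x \<in> cball x0 e"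
      have "norm (contour_integral (linepath x0 x) (\<lambda>_. b)) \<le> norm b * e"
        by (rule ci_bound[OF _ eR x]) auto
      also have "\<dots> \<le> norm b * 1" using eh e0 by (intro mult_left_mono) auto
      also have "\<dots> \<le> K" by (simp add: K_def)
      finally have 1: "norm (Y (Suc 0) x - Y 0 x) \<le> K * (1/2)^0" by (simp add: YS Y0 Z0)
      have "norm (contour_integral (linepath x0 x) (\<lambda>w. p w * a)) \<le> (M * norm a) * e"
        by (rule ci_bound[OF _ eR x]) (auto intro!: holomorphic_intros holp mult_right_mono Mc simp: norm_mult)
      also have "\<dots> = norm a * (e * M)" by simp
      also have "\<dots> \<le> norm a * (1/2)" using eM by (intro mult_left_mono) auto
      also have "\<dots> \<le> K" by (simp add: K_def)
      finally have 2: "norm (Z (Suc 0) x - Z 0 x) \<le> K * (1/2)^0" by (simp add: ZS Y0 Z0)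
      show "norm (Y (Suc 0) x - Y 0 x) \<le> K * (1 / 2) ^ 0 \<and> norm (Z (Suc 0) x - Z 0 x) \<le> K * (1 / 2) ^ 0"
        using 1 2 by blast
    qed
  next
    case (Suc n)
    show ?case
    proof
      fix x assume x: "x \<in> cball x0 e"
      have xR: "x \<in> ball x0 R" using x subc by auto
      have "Y (Suc (Suc n)) x - Y (Suc n) x = contour_integral (linepath x0 x) (\<lambda>w. Z (Suc n) w - Z n w)"
        unfolding YS by (simp add: ci_diff[OF conjunct2[OF hol] conjunct2[OF hol] xR])
      also have "norm \<dots> \<le> (K * (1/2)^n) * e"
        by (rule ci_bound[OF _ eR x]) (use Suc hol in \<open>auto intro!: holomorphic_intros\<close>)
      also have "\<dots> \<le> (K * (1/2)^n) * (1/2)" using eh K0 by (intro mult_left_mono) auto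
      also have "\<dots> = K * (1/2)^Suc n" by simp
      finally have 1: "norm (Y (Suc (Suc n)) x - Y (Suc n) x) \<le> K * (1/2)^Suc n" .
      have "Z (Suc (Suc n)) x - Z (Suc n) x = contour_integral (linepath x0 x) (\<lambda>w. p w * Y (Suc n) w - p w * Y n w)"
        unfolding ZS by (simp add: ci_diff[OF _ _ xR] hol holp holomorphic_intros)
      also have "norm \<dots> \<le> (M * (K * (1/2)^n)) * e"
      proof (rule ci_bound[OF _ eR x])
        show "(\<lambda>w. p w * Y (Suc n) w - p w * Y n w) holomorphic_on ball x0 R"
          using hol holp by (auto intro!: holomorphic_intros)
        fix w assume w: "w \<in> cball x0 e"
        have "norm (p w * Y (Suc n) w - p w * Y n w) = norm (p w) * norm (Y (Suc n) w - Y n w)"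
          by (simp add: norm_mult[symmetric] right_diff_distrib)
        also have "\<dots> \<le> M * (K * (1/2)^n)"
          using Suc w Mc[OF w] M0 by (intro mult_mono) auto
        finally show "norm (p w * Y (Suc n) w - p w * Y n w) \<le> M * (K * (1/2)^n)" .
      qed
      also have "\<dots> = (K * (1/2)^n) * (e * M)" by simp
      also have "\<dots> \<le> (K * (1/2)^n) * (1/2)" using eM K0 by (intro mult_left_mono) auto
      also have "\<dots> = K * (1/2)^Suc n" by simp
      finally have 2: "norm (Z (Suc (Suc n)) x - Z (Suc n) x) \<le> K * (1/2)^Suc n" .
      show "norm (Y (Suc (Suc n)) x - Y (Suc n) x) \<le> K * (1/2)^Suc n \<and>
            norm (Z (Suc (Suc n)) x - Z (Suc n) x) \<le> K * (1/2)^Suc n" using 1 2 by blast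
    qed
  qed
  have summ: "summable (\<lambda>n. K * (1/2::real)^n)"
    by (intro summable_mult summable_geometric) simp
  define YL where "YL x = a + (\<Sum>i. Y (Suc i) x - Y i x)" for x
  define ZL where "ZL x = b + (\<Sum>i. Z (Suc i) x - Z i x)" for x
  have ulY: "uniform_limit (cball x0 e) Y YL sequentially"
  proof -
    have "uniform_limit (cball x0 e) (\<lambda>n x. \<Sum>i<n. Y (Suc i) x - Y i x) (\<lambda>x. \<Sum>i. Y (Suc i) x - Y i x) sequentially"
      by (rule Weierstrass_m_test[OF _ summ]) (use bnd in blast)
    then have "uniform_limit (cball x0 e) (\<lambda>n x. a + (\<Sum>i<n. Y (Suc i) x - Y i x)) (\<lambda>x. a + (\<Sum>i. Y (Suc i) x - Y i x)) sequentially"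
      by (intro uniform_limit_add uniform_limit_const)
    moreover have "a + (\<Sum>i<n. Y (Suc i) x - Y i x) = Y n x" for n x
      by (subst sum_lessThan_telescope[of "\<lambda>i. Y i x"]) (simp add: Y0)
    ultimately show ?thesis unfolding YL_def by simp
  qed
  have ulZ: "uniform_limit (cball x0 e) Z ZL sequentially"
  proof -
    have "uniform_limit (cball x0 e) (\<lambda>n x. \<Sum>i<n. Z (Suc i) x - Z i x) (\<lambda>x. \<Sum>i. Z (Suc i) x - Z i x) sequentially"
      by (rule Weierstrass_m_test[OF _ summ]) (use bnd in blast)
    then have "uniform_limit (cball x0 e) (\<lambda>n x. b + (\<Sum>i<n. Z (Suc i) x - Z i x)) (\<lambda>x. b + (\<Sum>i. Z (Suc i) x - Z i x)) sequentially"
      by (intro uniform_limit_add uniform_limit_const)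
    moreover have "b + (\<Sum>i<n. Z (Suc i) x - Z i x) = Z n x" for n x
      by (subst sum_lessThan_telescope[of "\<lambda>i. Z i x"]) (simp add: Z0)
    ultimately show ?thesis unfolding ZL_def by simp
  qed
  have evc: "\<forall>\<^sub>F n in sequentially. continuous_on (cball x0 e) (Y n) \<and> Y n holomorphic_on ball x0 e"
    "\<forall>\<^sub>F n in sequentially. continuous_on (cball x0 e) (Z n) \<and> Z n holomorphic_on ball x0 e"
  proof -
    have be: "ball x0 e \<subseteq> ball x0 R" using subc ball_subset_cball[of x0 e] by blast
    show "\<forall>\<^sub>F n in sequentially. continuous_on (cball x0 e) (Y n) \<and> Y n holomorphic_on ball x0 e"
      using hol subc be by (auto intro!: always_eventually holomorphic_on_imp_continuous_on intro: holomorphic_on_subset)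
    show "\<forall>\<^sub>F n in sequentially. continuous_on (cball x0 e) (Z n) \<and> Z n holomorphic_on ball x0 e"
      using hol subc be by (auto intro!: always_eventually holomorphic_on_imp_continuous_on intro: holomorphic_on_subset)
  qed
  obtain cY: "continuous_on (cball x0 e) YL" and hY: "YL holomorphic_on ball x0 e"
    using holomorphic_uniform_limit[OF evc(1) ulY] by auto
  obtain cZ: "continuous_on (cball x0 e) ZL" and hZ: "ZL holomorphic_on ball x0 e"
    using holomorphic_uniform_limit[OF evc(2) ulZ] by auto
  have fixY: "YL x = a + contour_integral (linepath x0 x) ZL" and
       fixZ: "ZL x = b + contour_integral (linepath x0 x) (\<lambda>w. p w * YL w)" if x: "x \<in> cball x0 e" for x
  proof -
    have seg: "path_image (linepath x0 x) \<subseteq> cball x0 e"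
      using x by (simp add: path_image_linepath) (intro closed_segment_subset, auto simp: convex_cball, meson zero_le_dist order_trans)
    have xR: "x \<in> ball x0 R" using x subc by auto
    have segR: "path_image (linepath x0 x) \<subseteq> ball x0 R" using seg subc by auto
    have "((\<lambda>n. contour_integral (linepath x0 x) (Z n)) \<longlongrightarrow> contour_integral (linepath x0 x) ZL) sequentially"
      by (rule contour_integral_uniform_limit(2)[where B="norm (x - x0)"])
         (use hol segR seg in \<open>auto intro!: always_eventually contour_integrable_holomorphic_simple[where S="ball x0 R"] intro: uniform_limit_on_subset[OF ulY] uniform_limit_on_subset[OF ulZ]\<close>)
    then have "((\<lambda>n. Y (Suc n) x) \<longlongrightarrow> a + contour_integral (linepath x0 x) ZL) sequentially"
      unfolding YS by (intro tendsto_intros)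
    moreover have "((\<lambda>n. Y (Suc n) x) \<longlongrightarrow> YL x) sequentially"
      using tendsto_uniform_limitI[OF ulY x] by (rule LIMSEQ_Suc)
    ultimately show "YL x = a + contour_integral (linepath x0 x) ZL" using LIMSEQ_unique by blast
    have ulp: "uniform_limit (cball x0 e) (\<lambda>n w. p w * Y n w) (\<lambda>w. p w * YL w) sequentially"
      by (rule uniform_limit_mult_bounded[OF ulY Mc])
    have "((\<lambda>n. contour_integral (linepath x0 x) (\<lambda>w. p w * Y n w)) \<longlongrightarrow> contour_integral (linepath x0 x) (\<lambda>w. p w * YL w)) sequentially"
      by (rule contour_integral_uniform_limit(2)[where B="norm (x - x0)"])
         (use hol holp segR seg in \<open>auto intro!: always_eventually contour_integrable_holomorphic_simple[where S="ball x0 R"] holomorphic_intros intro: uniform_limit_on_subset[OF ulp]\<close>)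
    then have "((\<lambda>n. Z (Suc n) x) \<longlongrightarrow> b + contour_integral (linepath x0 x) (\<lambda>w. p w * YL w)) sequentially"
      unfolding ZS by (intro tendsto_intros)
    moreover have "((\<lambda>n. Z (Suc n) x) \<longlongrightarrow> ZL x) sequentially"
      using tendsto_uniform_limitI[OF ulZ x] by (rule LIMSEQ_Suc)
    ultimately show "ZL x = b + contour_integral (linepath x0 x) (\<lambda>w. p w * YL w)" using LIMSEQ_unique by blast
  qed
  have x0c: "x0 \<in> cball x0 e" using e0 by simp
  have holpe: "p holomorphic_on ball x0 e" by (rule holomorphic_on_subset[OF holp]) (use eR in auto)
  show ?thesis
  proof (intro exI conjI ballI)
    show "e > 0" by fact
    show "YL holomorphic_on ball x0 e" "ZL holomorphic_on ball x0 e" by fact+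
    show "YL x0 = a" "ZL x0 = b" using fixY[OF x0c] fixZ[OF x0c] by simp_all
  next
    fix x assume x: "x \<in> ball x0 e"
    have "((\<lambda>x. a + contour_integral (linepath x0 x) ZL) has_field_derivative (0 + ZL x)) (at x)"
      by (intro DERIV_add DERIV_const prim_ball[OF hZ x])
    then have "((\<lambda>x. a + contour_integral (linepath x0 x) ZL) has_field_derivative ZL x) (at x)" by simp
    then show "(YL has_field_derivative ZL x) (at x)"
      by (rule has_field_derivative_transform_within_open[where S="ball x0 e"]) (use x fixY in auto)
    have "((\<lambda>x. b + contour_integral (linepath x0 x) (\<lambda>w. p w * YL w)) has_field_derivative (0 + p x * YL x)) (at x)"
      by (intro DERIV_add DERIV_const prim_ball[OF _ x] holomorphic_intros hY holpe)
    then have "((\<lambda>x. b + contour_integral (linepath x0 x) (\<lambda>w. p w * YL w)) has_field_derivative (p x * YL x)) (at x)" by simp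
    then show "(ZL has_field_derivative p x * YL x) (at x)"
      by (rule has_field_derivative_transform_within_open[where S="ball x0 e"]) (use x fixZ in auto)
  qed
qed

lemma factor_zero:
  fixes f :: "complex \<Rightarrow> complex"
  assumes holf: "f holomorphic_on ball x0 R" and R: "R > 0" and f0: "f x0 = 0"
  shows "\<exists>h. h holomorphic_on ball x0 R \<and> h x0 = deriv f x0 \<and> (\<forall>z\<in>ball x0 R. f z = (z - x0) * h z)"
proof (intro exI conjI ballI)
  show "(\<lambda>z. if z = x0 then deriv f x0 else (f z - f x0) / (z - x0)) holomorphic_on ball x0 R"
    by (rule pole_lemma[OF holf]) (use R in simp)
  show "(if x0 = x0 then deriv f x0 else (f x0 - f x0) / (x0 - x0)) = deriv f x0" by simp
  fix z assume "z \<in> ball x0 R"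
  show "f z = (z - x0) * (if z = x0 then deriv f x0 else (f z - f x0) / (z - x0))"
    using f0 by auto
qed

lemma nonzero_near:
  fixes h :: "complex \<Rightarrow> complex"
  assumes holh: "h holomorphic_on ball x0 R" and R: "R > 0" and h0: "h x0 \<noteq> 0"
  shows "\<exists>R1>0. R1 \<le> R \<and> (\<forall>z\<in>ball x0 R1. h z \<noteq> 0)"
proof -
  have "continuous (at x0) h"
    using holomorphic_on_imp_continuous_on[OF holh] R continuous_on_eq_continuous_at[of "ball x0 R" h]
    by auto
  from continuous_at_avoid[OF this h0] obtain d where d: "d > 0" "\<And>y. dist x0 y < d \<Longrightarrow> h y \<noteq> 0" by auto
  show ?thesis
    by (rule exI[of _ "min d R"]) (use d R in auto)
qed

lemma sys_exists:
  fixes s :: "complex \<Rightarrow> complex"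
  assumes hols: "s holomorphic_on ball x0 R" and R: "R > 0" and s0: "s x0 = 0"
    and s1: "deriv s x0 \<noteq> 0" and s2: "deriv (deriv s) x0 = 0" and rho: "\<rho> \<noteq> 0"
  shows "\<exists>e>0. \<exists>u1 u2 v1 v2. (\<forall>x\<in>ball x0 e - {x0}. s x \<noteq> 0 \<and>
      (u1 has_field_derivative \<rho> * inverse ((s x)^2) * v1 x) (at x) \<and>
      (u2 has_field_derivative \<rho> * inverse ((s x)^2) * v2 x) (at x) \<and>
      (v1 has_field_derivative \<rho> * (s x)^2 * u1 x) (at x) \<and>
      (v2 has_field_derivative \<rho> * (s x)^2 * u2 x) (at x) \<and>
      u1 x * v2 x - u2 x * v1 x \<noteq> 0) \<and>
      not_essential u1 x0 \<and> not_essential u2 x0 \<and> not_essential v1 x0 \<and> not_essential v2 x0"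
proof -
  obtain h where holh: "h holomorphic_on ball x0 R" and h0: "h x0 = deriv s x0"
    and sh: "\<And>z. z \<in> ball x0 R \<Longrightarrow> s z = (z - x0) * h z"
    using factor_zero[OF hols R s0] by blast
  have hol1: "deriv s holomorphic_on ball x0 R" using hols by (intro holomorphic_deriv) auto
  have hol2: "deriv (deriv s) holomorphic_on ball x0 R" by (rule holomorphic_deriv[OF hol1]) auto
  obtain g where holg: "g holomorphic_on ball x0 R"
    and sg: "\<And>z. z \<in> ball x0 R \<Longrightarrow> deriv (deriv s) z = (z - x0) * g z"
    using factor_zero[OF hol2 R s2] by blast
  obtain R1 where R1: "R1 > 0" "R1 \<le> R" and hnz: "\<And>z. z \<in> ball x0 R1 \<Longrightarrow> h z \<noteq> 0"
    using nonzero_near[OF holh R] h0 s1 by auto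
  have sub1: "ball x0 R1 \<subseteq> ball x0 R" using R1 by auto
  define p where "p z = \<rho>^2 + g z / h z" for z
  have holp: "p holomorphic_on ball x0 R1" unfolding p_def
    using hnz holomorphic_on_subset[OF holg sub1] holomorphic_on_subset[OF holh sub1]
    by (auto intro!: holomorphic_intros)
  obtain e1 y1 z1 where e1: "e1 > 0" and hy1: "y1 holomorphic_on ball x0 e1" and hz1: "z1 holomorphic_on ball x0 e1"
    and i1: "y1 x0 = 1" "z1 x0 = 0"
    and d1: "\<And>x. x \<in> ball x0 e1 \<Longrightarrow> (y1 has_field_derivative z1 x) (at x) \<and> (z1 has_field_derivative p x * y1 x) (at x)"
    using ode_exists[OF holp R1(1), of 1 0] by blast
  obtain e2 y2 z2 where e2: "e2 > 0" and hy2: "y2 holomorphic_on ball x0 e2" and hz2: "z2 holomorphic_on ball x0 e2"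
    and i2: "y2 x0 = 0" "z2 x0 = 1"
    and d2: "\<And>x. x \<in> ball x0 e2 \<Longrightarrow> (y2 has_field_derivative z2 x) (at x) \<and> (z2 has_field_derivative p x * y2 x) (at x)"
    using ode_exists[OF holp R1(1), of 0 1] by blast
  define e where "e = min (min e1 e2) R1"
  have e0: "e > 0" using e1 e2 R1 by (simp add: e_def)
  have eb: "ball x0 e \<subseteq> ball x0 e1" "ball x0 e \<subseteq> ball x0 e2" "ball x0 e \<subseteq> ball x0 R1" "ball x0 e \<subseteq> ball x0 R"
    using R1 by (auto simp: e_def)
  have W1: "y1 x * z2 x - y2 x * z1 x = 1" if x: "x \<in> ball x0 e" for x
  proof -
    have "\<exists>c. \<forall>x\<in>ball x0 e. y1 x * z2 x - y2 x * z1 x = c"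
    proof (rule has_field_derivative_zero_constant)
      fix x assume x: "x \<in> ball x0 e"
      have f1: "(y1 has_field_derivative z1 x) (at x)" "(z1 has_field_derivative p x * y1 x) (at x)"
        using d1[of x] x eb by auto
      have f2: "(y2 has_field_derivative z2 x) (at x)" "(z2 has_field_derivative p x * y2 x) (at x)"
        using d2[of x] x eb by auto
      have "((\<lambda>x. y1 x * z2 x - y2 x * z1 x) has_field_derivative
              (z1 x * z2 x + (p x * y2 x) * y1 x) - (z2 x * z1 x + (p x * y1 x) * y2 x)) (at x)"
        by (intro DERIV_diff DERIV_mult f1 f2)
      then show "((\<lambda>x. y1 x * z2 x - y2 x * z1 x) has_field_derivative 0) (at x within ball x0 e)"
        by (auto simp: algebra_simps intro: has_field_derivative_at_within)
    qed simp
    then obtain c where c: "\<forall>x\<in>ball x0 e. y1 x * z2 x - y2 x * z1 x = c" by blast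
    have "c = 1" using c[rule_format, of x0] e0 i1 i2 by simp
    then show ?thesis using c x by auto
  qed
  define u1 where "u1 x = y1 x / s x" for x
  define u2 where "u2 x = y2 x / s x" for x
  define v1 where "v1 x = (s x * z1 x - deriv s x * y1 x) / \<rho>" for x
  define v2 where "v2 x = (s x * z2 x - deriv s x * y2 x) / \<rho>" for x
  have key: "s x \<noteq> 0 \<and>
      (u1 has_field_derivative \<rho> * inverse ((s x)^2) * v1 x) (at x) \<and>
      (u2 has_field_derivative \<rho> * inverse ((s x)^2) * v2 x) (at x) \<and>
      (v1 has_field_derivative \<rho> * (s x)^2 * u1 x) (at x) \<and>
      (v2 has_field_derivative \<rho> * (s x)^2 * u2 x) (at x) \<and>
      u1 x * v2 x - u2 x * v1 x \<noteq> 0" if x: "x \<in> ball x0 e - {x0}" for x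
  proof -
    have xe: "x \<in> ball x0 e" and xn: "x \<noteq> x0" using x by auto
    have xR: "x \<in> ball x0 R" and xR1: "x \<in> ball x0 R1" using xe eb by auto
    have hx: "h x \<noteq> 0" using hnz xR1 by auto
    have sx: "s x \<noteq> 0" using sh[OF xR] hx xn by simp
    have ds: "(s has_field_derivative deriv s x) (at x)" using hols xR by (intro holomorphic_derivI) auto
    have dds: "(deriv s has_field_derivative deriv (deriv s) x) (at x)" using hol1 xR by (intro holomorphic_derivI) auto
    have s2x: "deriv (deriv s) x = (x - x0) * g x" using sg[OF xR] .
    have sxh: "s x = (x - x0) * h x" using sh[OF xR] .
    have px: "p x = \<rho>^2 + g x / h x" by (simp add: p_def)
    have du: "(u has_field_derivative \<rho> * inverse ((s x)^2) * ((s x * z x - deriv s x * y x) / \<rho>)) (at x)"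
      if "u = (\<lambda>x. y x / s x)" "(y has_field_derivative z x) (at x)" for u y z
    proof -
      have "((\<lambda>x. y x / s x) has_field_derivative (z x * s x - y x * deriv s x) / (s x * s x)) (at x)"
        by (rule DERIV_divide[OF that(2) ds sx])
      then show ?thesis unfolding that(1)
        by (rule DERIV_cong) (use sx rho in \<open>simp add: field_simps power2_eq_square\<close>)
    qed
    have dv: "(v has_field_derivative \<rho> * (s x)^2 * (y x / s x)) (at x)"
      if "v = (\<lambda>x. (s x * z x - deriv s x * y x) / \<rho>)" "(y has_field_derivative z x) (at x)"
         "(z has_field_derivative p x * y x) (at x)" for v y z
    proof -
      have "(v has_field_derivative ((deriv s x * z x + (p x * y x) * s x) - (deriv (deriv s) x * y x + z x * deriv s x)) / \<rho>) (at x)"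
        unfolding that(1) by (intro DERIV_cdivide DERIV_diff DERIV_mult ds dds that(2,3))
      moreover have "((deriv s x * z x + (p x * y x) * s x) - (deriv (deriv s) x * y x + z x * deriv s x)) / \<rho>
          = \<rho> * (s x)^2 * (y x / s x)"
        using sx hx rho xn unfolding s2x px sxh by (simp add: field_simps power2_eq_square)
      ultimately show ?thesis by simp
    qed
    have "u1 x * v2 x - u2 x * v1 x = (y1 x * z2 x - y2 x * z1 x) / \<rho>"
      using sx rho by (simp add: u1_def u2_def v1_def v2_def field_simps)
    also have "\<dots> = 1 / \<rho>" using W1[OF xe] by simp
    finally have det: "u1 x * v2 x - u2 x * v1 x \<noteq> 0" using rho by simp
    have "(u1 has_field_derivative \<rho> * inverse ((s x)^2) * v1 x) (at x)"
      unfolding v1_def by (rule du) (use d1 xe eb in \<open>auto simp: u1_def[abs_def]\<close>)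
    moreover have "(u2 has_field_derivative \<rho> * inverse ((s x)^2) * v2 x) (at x)"
      unfolding v2_def by (rule du) (use d2 xe eb in \<open>auto simp: u2_def[abs_def]\<close>)
    moreover have "(v1 has_field_derivative \<rho> * (s x)^2 * u1 x) (at x)"
      unfolding u1_def by (rule dv) (use d1 xe eb in \<open>auto simp: v1_def[abs_def]\<close>)
    moreover have "(v2 has_field_derivative \<rho> * (s x)^2 * u2 x) (at x)"
      unfolding u2_def by (rule dv) (use d2 xe eb in \<open>auto simp: v2_def[abs_def]\<close>)
    ultimately show ?thesis using sx det by blast
  qed
  have holse: "s holomorphic_on ball x0 e" using hols eb by (blast intro: holomorphic_on_subset)
  have hol1e: "deriv s holomorphic_on ball x0 e" using hol1 eb by (blast intro: holomorphic_on_subset)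
  have hy1e: "y1 holomorphic_on ball x0 e" "z1 holomorphic_on ball x0 e"
    using hy1 hz1 eb by (blast intro: holomorphic_on_subset)+
  have hy2e: "y2 holomorphic_on ball x0 e" "z2 holomorphic_on ball x0 e"
    using hy2 hz2 eb by (blast intro: holomorphic_on_subset)+
  have cen: "x0 \<in> ball x0 e" using e0 by simp
  have iso: "isolated_singularity_at f x0" if "f holomorphic_on ball x0 e" for f
    by (rule isolated_singularity_at_holomorphic[of _ "ball x0 e"]) (use that cen in \<open>auto intro: holomorphic_on_subset\<close>)
  have ne: "not_essential f x0" if "f holomorphic_on ball x0 e" for f
    by (rule not_essential_holomorphic[OF that cen]) simp
  have "not_essential u1 x0" unfolding u1_def[abs_def]
    by (intro not_essential_divide ne iso hy1e holse)
  moreover have "not_essential u2 x0" unfolding u2_def[abs_def]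
    by (intro not_essential_divide ne iso hy2e holse)
  moreover have "not_essential v1 x0" unfolding v1_def[abs_def]
    by (intro ne holomorphic_intros hy1e holse hol1e) (use rho in auto)
  moreover have "not_essential v2 x0" unfolding v2_def[abs_def]
    by (intro ne holomorphic_intros hy2e holse hol1e) (use rho in auto)
  ultimately show ?thesis using key e0 by blast
qed

lemma eq_center:
  fixes F G :: "complex \<Rightarrow> complex"
  assumes d: "d > 0" and cF: "continuous_on (ball x0 d) F" and cG: "continuous_on (ball x0 d) G"
    and eq: "\<And>w. w \<in> ball x0 d - {x0} \<Longrightarrow> F w = G w"
  shows "F x0 = G x0"
proof -
  have c: "x0 \<in> ball x0 d" using d by simp
  have "(F \<longlongrightarrow> F x0) (at x0)"
    using cF c continuous_on_eq_continuous_at[of "ball x0 d" F] by (auto simp: isCont_def)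
  moreover have "(G \<longlongrightarrow> G x0) (at x0)"
    using cG c continuous_on_eq_continuous_at[of "ball x0 d" G] by (auto simp: isCont_def)
  moreover have "\<forall>\<^sub>F w in at x0. F w = G w"
    unfolding eventually_at using d eq by (auto simp: dist_commute)
  ultimately have "(G \<longlongrightarrow> F x0) (at x0)" by (simp add: tendsto_cong)
  then show ?thesis using \<open>(G \<longlongrightarrow> G x0) (at x0)\<close> LIM_unique by blast
qed

lemma deriv_eq_open:
  fixes f g :: "complex \<Rightarrow> complex"
  assumes "(f has_field_derivative a) (at x)" "(g has_field_derivative b) (at x)"
    "open S" "x \<in> S" "\<And>w. w \<in> S \<Longrightarrow> f w = g w"
  shows "a = b"
proof -
  have "(g has_field_derivative a) (at x)"
    by (rule has_field_derivative_transform_within_open[OF assms(1,3,4,5)])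
  then show ?thesis using assms(2) DERIV_unique by blast
qed

lemma key_local:
  fixes y z k :: "complex \<Rightarrow> complex"
  assumes d: "d > 0"
   and dy: "\<And>w. w \<in> ball x0 d - {x0} \<Longrightarrow> (y has_field_derivative z w) (at w)"
   and dz: "\<And>w. w \<in> ball x0 d - {x0} \<Longrightarrow> (z has_field_derivative (1 + k w / (w - x0)) * y w) (at w)"
   and holk: "k holomorphic_on ball x0 d" and k0: "k x0 \<noteq> 0"
   and ne: "not_essential y x0"
  shows "(y \<longlongrightarrow> 0) (at x0) \<and> (\<exists>L. (z \<longlongrightarrow> L) (at x0))"
proof -
  have holy: "y holomorphic_on ball x0 d - {x0}" by (rule holo_of_deriv[OF dy])
  have isoy: "isolated_singularity_at y x0"
    by (rule isolated_singularity_at_holomorphic[OF holy]) (use d in auto)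
  show ?thesis
  proof (cases "\<exists>\<^sub>F w in at x0. y w \<noteq> 0")
    case False
    then have "\<forall>\<^sub>F w in at x0. y w = 0" by (simp add: not_frequently)
    then obtain d1 where d1: "d1 > 0" "\<And>w. w \<noteq> x0 \<Longrightarrow> dist w x0 < d1 \<Longrightarrow> y w = 0"
      unfolding eventually_at by auto
    define d2 where "d2 = min d d1"
    have d2: "d2 > 0" using d d1 by (simp add: d2_def)
    have z0: "z w = 0" if w: "w \<in> ball x0 d2 - {x0}" for w
    proof (rule deriv_eq_open[OF dy DERIV_const[of 0 "at w"]])
      show "w \<in> ball x0 d - {x0}" using w by (auto simp: d2_def)
      show "open (ball x0 d2 - {x0})" by auto
      show "w \<in> ball x0 d2 - {x0}" by fact
      fix v assume "v \<in> ball x0 d2 - {x0}"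
      then show "y v = 0" using d1 by (auto simp: d2_def dist_commute)
    qed
    have "\<forall>\<^sub>F w in at x0. z w = 0"
      unfolding eventually_at using d2 z0 by (auto simp: dist_commute)
    then have "(z \<longlongrightarrow> 0) (at x0)" by (simp add: tendsto_eventually)
    moreover have "(y \<longlongrightarrow> 0) (at x0)" using \<open>\<forall>\<^sub>F w in at x0. y w = 0\<close> by (simp add: tendsto_eventually)
    ultimately show ?thesis by blast
  next
    case True
    define n where "n = zorder y x0"
    define g where "g = zor_poly y x0"
    obtain r where g0: "g x0 \<noteq> 0" and r: "r > 0" and holgc: "g holomorphic_on cball x0 r"
      and yg: "\<And>w. w \<in> cball x0 r - {x0} \<Longrightarrow> y w = g w * (w - x0) powi n \<and> g w \<noteq> 0"
      using zorder_exist[OF isoy ne True] unfolding n_def g_def by blast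
    define e where "e = min r d"
    have e: "e > 0" using r d by (simp add: e_def)
    have holg: "g holomorphic_on ball x0 e"
      by (rule holomorphic_on_subset[OF holgc]) (auto simp: e_def)
    define g1 where "g1 = deriv g"
    define g2 where "g2 = deriv g1"
    have holg1: "g1 holomorphic_on ball x0 e" unfolding g1_def by (rule holomorphic_deriv[OF holg]) auto
    have holg2: "g2 holomorphic_on ball x0 e" unfolding g2_def by (rule holomorphic_deriv[OF holg1]) auto
    have holke: "k holomorphic_on ball x0 e" by (rule holomorphic_on_subset[OF holk]) (auto simp: e_def)
    have Te: "w \<in> ball x0 d - {x0}" "w \<in> cball x0 r - {x0}" if "w \<in> ball x0 e - {x0}" for w
      using that by (auto simp: e_def)
    have oT: "open (ball x0 e - {x0})" by auto
    have dpow: "((\<lambda>w. (w - x0) powi m) has_field_derivative of_int m * (w - x0) powi (m - 1)) (at w)"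
      if "w \<noteq> x0" for w m
      using DERIV_power_int[where n=m, OF DERIV_diff[OF DERIV_ident[of "at w"] DERIV_const[of x0 "at w"]]] that by simp
    have zf: "z w = g1 w * (w - x0) powi n + g w * (of_int n * (w - x0) powi (n - 1))"
      if w: "w \<in> ball x0 e - {x0}" for w
    proof (rule deriv_eq_open[OF dy[OF Te(1)[OF w]] _ oT w])
      show "((\<lambda>w. g w * (w - x0) powi n) has_field_derivative
              g1 w * (w - x0) powi n + g w * (of_int n * (w - x0) powi (n - 1))) (at w)"
        using DERIV_mult'[OF holomorphic_derivI[OF holg _ , of w] dpow[of w n]] w unfolding g1_def by (auto simp: add.commute)
      show "y v = g v * (v - x0) powi n" if "v \<in> ball x0 e - {x0}" for v using yg Te(2)[OF that] by blast
    qed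
    have E: "of_int n * (of_int n - 1) * g w + (w - x0) * (2 * of_int n * g1 w + (w - x0) * g2 w)
             = (w - x0) * (w - x0 + k w) * g w" if w: "w \<in> ball x0 e - {x0}" for w
    proof -
      have wn: "w \<noteq> x0" using w by auto
      have a1: "(g1 has_field_derivative g2 w) (at w)"
        using holomorphic_derivI[OF holg1 _ , of w] w unfolding g2_def by auto
      have a2: "(g has_field_derivative g1 w) (at w)"
        using holomorphic_derivI[OF holg _ , of w] w unfolding g1_def by auto
      have q1: "((\<lambda>w. (w - x0) powi n) has_field_derivative of_int n * (w - x0) powi (n - 1)) (at w)"
        using dpow[OF wn, of n] .
      have q2: "((\<lambda>w. (w - x0) powi (n - 1)) has_field_derivative of_int (n - 1) * (w - x0) powi (n - 2)) (at w)"
        using dpow[OF wn, of "n - 1"] by (simp add: algebra_simps)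
      have dF: "((\<lambda>w. g1 w * (w - x0) powi n + g w * (of_int n * (w - x0) powi (n - 1))) has_field_derivative
          (g2 w * (w - x0) powi n + g1 w * (of_int n * (w - x0) powi (n - 1)))
          + (g1 w * (of_int n * (w - x0) powi (n - 1)) + g w * (of_int n * (of_int (n - 1) * (w - x0) powi (n - 2))))) (at w)"
        by (rule DERIV_cong[OF DERIV_add[OF DERIV_mult[OF a1 q1] DERIV_mult[OF a2 DERIV_cmult[OF q2]]]])
           (simp add: algebra_simps)
      have eq: "(g2 w * (w - x0) powi n + g1 w * (of_int n * (w - x0) powi (n - 1)))
          + (g1 w * (of_int n * (w - x0) powi (n - 1)) + g w * (of_int n * (of_int (n - 1) * (w - x0) powi (n - 2))))
          = (1 + k w / (w - x0)) * y w"
      proof (rule deriv_eq_open[OF dF dz[OF Te(1)[OF w]] oT w])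
        fix v assume "v \<in> ball x0 e - {x0}"
        then show "g1 v * (v - x0) powi n + g v * (of_int n * (v - x0) powi (n - 1)) = z v"
          using zf by simp
      qed
      define t where "t = w - x0"
      have t0: "t \<noteq> 0" using wn by (simp add: t_def)
      define P where "P = t powi (n - 2)"
      have P0: "P \<noteq> 0" using t0 by (simp add: P_def)
      have p0: "t powi n = P * t^2"
        using power_int_add[of t "n - 2" 2] t0 by (simp add: P_def)
      have p1: "t powi (n - 1) = P * t"
        using power_int_add[of t "n - 2" 1] t0 by (simp add: P_def)
      have p2: "t powi (n - 2) = P" by (simp add: P_def)
      have yw0: "y w = g w * t powi n" using yg[OF Te(2)[OF w]] unfolding t_def by blast
      have yw: "y w = g w * (P * t^2)" using yw0 unfolding p0 .
      have eq2: "(g2 w * t powi n + g1 w * (of_int n * t powi (n - 1)))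
          + (g1 w * (of_int n * t powi (n - 1)) + g w * (of_int n * (of_int (n - 1) * t powi (n - 2))))
          = (1 + k w / t) * y w" using eq unfolding t_def .
      have L: "(g2 w * (P * t^2) + g1 w * (of_int n * (P * t)))
          + (g1 w * (of_int n * (P * t)) + g w * (of_int n * (of_int (n - 1) * P)))
          = P * (g2 w * t^2 + 2 * of_int n * g1 w * t + of_int n * (of_int n - 1) * g w)"
        by (simp add: algebra_simps power2_eq_square)
      have Rr: "(1 + k w / t) * (g w * (P * t^2)) = P * (t * (t + k w) * g w)"
        using t0 by (simp add: field_simps power2_eq_square)
      from eq2 have "P * (g2 w * t^2 + 2 * of_int n * g1 w * t + of_int n * (of_int n - 1) * g w)
          = P * (t * (t + k w) * g w)"
        unfolding p0 p1 p2 yw L Rr .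
      then have "g2 w * t^2 + 2 * of_int n * g1 w * t + of_int n * (of_int n - 1) * g w
          = t * (t + k w) * g w" using P0 by simp
      then have "of_int n * (of_int n - 1) * g w + t * (2 * of_int n * g1 w + t * g2 w)
             = t * (t + k w) * g w"
      proof -
        have "of_int n * (of_int n - 1) * g w + t * (2 * of_int n * g1 w + t * g2 w)
          = g2 w * t^2 + 2 * of_int n * g1 w * t + of_int n * (of_int n - 1) * g w"
          by (simp add: algebra_simps power2_eq_square)
        then show ?thesis using \<open>g2 w * t^2 + 2 * of_int n * g1 w * t + of_int n * (of_int n - 1) * g w
          = t * (t + k w) * g w\<close> by simp
      qed
      then show ?thesis unfolding t_def .
    qed
    have cont: "continuous_on (ball x0 e) f" if "f holomorphic_on ball x0 e" for f
      using that holomorphic_on_imp_continuous_on by blast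
    have "of_int n * (of_int n - 1) * g x0 + (x0 - x0) * (2 * of_int n * g1 x0 + (x0 - x0) * g2 x0)
             = (x0 - x0) * (x0 - x0 + k x0) * g x0"
    proof (rule eq_center[OF e, where F="\<lambda>w. of_int n * (of_int n - 1) * g w + (w - x0) * (2 * of_int n * g1 w + (w - x0) * g2 w)"
            and G="\<lambda>w. (w - x0) * (w - x0 + k w) * g w"])
      show "continuous_on (ball x0 e) (\<lambda>w. of_int n * (of_int n - 1) * g w + (w - x0) * (2 * of_int n * g1 w + (w - x0) * g2 w))"
        by (intro cont holomorphic_intros holg holg1 holg2)
      show "continuous_on (ball x0 e) (\<lambda>w. (w - x0) * (w - x0 + k w) * g w)"
        by (intro cont holomorphic_intros holg holke)
    qed (rule E)
    then have "(of_int n :: complex) * (of_int n - 1) = 0" using g0 by simp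
    then have n01: "n = 0 \<or> n = 1" by auto
    have "n = 1"
    proof (rule ccontr)
      assume "n \<noteq> 1"
      then have n0: "n = 0" using n01 by simp
      have E2: "(w - x0) * g2 w = (w - x0 + k w) * g w" if w: "w \<in> ball x0 e - {x0}" for w
      proof -
        have "(w - x0) * ((w - x0) * g2 w) = (w - x0) * ((w - x0 + k w) * g w)"
          using E[OF w] n0 by (simp add: algebra_simps)
        then show ?thesis using w by auto
      qed
      have "(x0 - x0) * g2 x0 = (x0 - x0 + k x0) * g x0"
      proof (rule eq_center[OF e, where F="\<lambda>w. (w - x0) * g2 w" and G="\<lambda>w. (w - x0 + k w) * g w"])
        show "continuous_on (ball x0 e) (\<lambda>w. (w - x0) * g2 w)"
          by (intro cont holomorphic_intros holg2)
        show "continuous_on (ball x0 e) (\<lambda>w. (w - x0 + k w) * g w)"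
          by (intro cont holomorphic_intros holg holke)
      qed (rule E2)
      then show False using k0 g0 by simp
    qed
    have ev: "\<forall>\<^sub>F w in at x0. w \<in> ball x0 e - {x0}"
      unfolding eventually_at using e by (auto simp: dist_commute)
    have cg: "isCont f x0" if "f holomorphic_on ball x0 e" for f
      using cont[OF that] e continuous_on_eq_continuous_at[of "ball x0 e" f] by auto
    have "((\<lambda>w. g w * (w - x0)) \<longlongrightarrow> g x0 * (x0 - x0)) (at x0)"
      using cg[OF holg] by (intro tendsto_intros) (auto simp: isCont_def)
    then have l1: "((\<lambda>w. g w * (w - x0)) \<longlongrightarrow> 0) (at x0)" by simp
    have ev1: "\<forall>\<^sub>F w in at x0. y w = g w * (w - x0)"
      using ev by eventually_elim (use yg Te \<open>n = 1\<close> in auto)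
    have ylim: "(y \<longlongrightarrow> 0) (at x0)" using l1 tendsto_cong[OF ev1] by simp
    have l2: "((\<lambda>w. g1 w * (w - x0) + g w) \<longlongrightarrow> g1 x0 * (x0 - x0) + g x0) (at x0)"
      using cg[OF holg] cg[OF holg1] by (intro tendsto_intros) (auto simp: isCont_def)
    have ev2: "\<forall>\<^sub>F w in at x0. z w = g1 w * (w - x0) + g w"
      using ev by eventually_elim (use zf \<open>n = 1\<close> in auto)
    have "(z \<longlongrightarrow> g1 x0 * (x0 - x0) + g x0) (at x0)" using l2 tendsto_cong[OF ev2] by simp
    then show ?thesis using ylim by blast
  qed
qed

lemma sys_nec:
  fixes s u1 u2 v1 v2 :: "complex \<Rightarrow> complex"
  assumes hols: "s holomorphic_on ball x0 R" and R: "R > 0" and s0: "s x0 = 0" and s1: "deriv s x0 \<noteq> 0"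
    and e: "e > 0"
    and D: "\<And>x. x \<in> ball x0 e - {x0} \<Longrightarrow>
      (u1 has_field_derivative inverse ((s x)^2) * v1 x) (at x) \<and>
      (u2 has_field_derivative inverse ((s x)^2) * v2 x) (at x) \<and>
      (v1 has_field_derivative (s x)^2 * u1 x) (at x) \<and>
      (v2 has_field_derivative (s x)^2 * u2 x) (at x) \<and>
      u1 x * v2 x - u2 x * v1 x \<noteq> 0"
    and ne1: "not_essential u1 x0" and ne2: "not_essential u2 x0"
  shows "deriv (deriv s) x0 = 0"
proof (rule ccontr)
  assume c: "deriv (deriv s) x0 \<noteq> 0"
  obtain h where holh: "h holomorphic_on ball x0 R" and h0: "h x0 = deriv s x0"
    and sh: "\<And>z. z \<in> ball x0 R \<Longrightarrow> s z = (z - x0) * h z"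
    using factor_zero[OF hols R s0] by blast
  have hol1: "deriv s holomorphic_on ball x0 R" using hols by (intro holomorphic_deriv) auto
  have hol2: "deriv (deriv s) holomorphic_on ball x0 R" by (rule holomorphic_deriv[OF hol1]) auto
  obtain R1 where R1: "R1 > 0" "R1 \<le> R" and hnz: "\<And>z. z \<in> ball x0 R1 \<Longrightarrow> h z \<noteq> 0"
    using nonzero_near[OF holh R] h0 s1 by auto
  define d where "d = min e R1"
  have d: "d > 0" using e R1 by (simp add: d_def)
  have dsub: "ball x0 d \<subseteq> ball x0 R" "ball x0 d \<subseteq> ball x0 R1" "ball x0 d \<subseteq> ball x0 e"
    using R1 by (auto simp: d_def)
  define k where "k z = deriv (deriv s) z / h z" for z
  have holk: "k holomorphic_on ball x0 d" unfolding k_def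
    by (rule holomorphic_on_divide[OF holomorphic_on_subset[OF hol2 dsub(1)] holomorphic_on_subset[OF holh dsub(1)]])
       (use dsub hnz in auto)
  have k0: "k x0 \<noteq> 0" using c h0 s1 by (simp add: k_def)
  define S where "S = ball x0 d - {x0}"
  have oS: "open S" unfolding S_def by (intro open_Diff) auto
  have inS: "x \<in> ball x0 d - {x0}" if "x \<in> S" for x using that by (simp add: S_def)
  have facts: "s x \<noteq> 0 \<and> (s has_field_derivative deriv s x) (at x) \<and>
       (deriv s has_field_derivative deriv (deriv s) x) (at x) \<and> s x = (x - x0) * h x \<and> h x \<noteq> 0"
    if x: "x \<in> S" for x
  proof -
    have xR: "x \<in> ball x0 R" and xR1: "x \<in> ball x0 R1" and xn: "x \<noteq> x0"
      using x dsub by (auto simp: S_def)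
    show ?thesis using sh[OF xR] hnz[OF xR1] xn holomorphic_derivI[OF hols _ xR] holomorphic_derivI[OF hol1 _ xR]
      by auto
  qed
  have De: "x \<in> ball x0 e - {x0}" if "x \<in> S" for x using that dsub by (auto simp: S_def)
  define y1 where "y1 x = s x * u1 x" for x
  define y2 where "y2 x = s x * u2 x" for x
  define z1 where "z1 x = deriv s x * u1 x + v1 x / s x" for x
  define z2 where "z2 x = deriv s x * u2 x + v2 x / s x" for x
  have gen: "(y has_field_derivative z x) (at x) \<and> (z has_field_derivative (1 + k x / (x - x0)) * y x) (at x)"
    if x: "x \<in> S" and yd: "y = (\<lambda>x. s x * u x)" and zd: "z = (\<lambda>x. deriv s x * u x + v x / s x)"
      and du: "(u has_field_derivative inverse ((s x)^2) * v x) (at x)"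
      and dv: "(v has_field_derivative (s x)^2 * u x) (at x)" for y z u v x
  proof -
    have sx: "s x \<noteq> 0" and ds: "(s has_field_derivative deriv s x) (at x)"
      and dds: "(deriv s has_field_derivative deriv (deriv s) x) (at x)"
      and sxh: "s x = (x - x0) * h x" and hx: "h x \<noteq> 0" using facts[OF x] by auto
    have xn: "x \<noteq> x0" using x by (simp add: S_def)
    have "(y has_field_derivative z x) (at x)" unfolding yd zd
      by (rule DERIV_cong[OF DERIV_mult[OF ds du]]) (use sx in \<open>simp add: field_simps power2_eq_square\<close>)
    moreover have "(z has_field_derivative (1 + k x / (x - x0)) * y x) (at x)" unfolding zd
    proof (rule DERIV_cong[OF DERIV_add[OF DERIV_mult[OF dds du] DERIV_divide[OF dv ds sx]]])
      show "deriv (deriv s) x * u x + inverse ((s x)\<^sup>2) * v x * deriv s x +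
          ((s x)\<^sup>2 * u x * s x - v x * deriv s x) / (s x * s x) = (1 + k x / (x - x0)) * y x"
      proof -
        have A: "(1 + k x / (x - x0)) * y x = s x * u x + deriv (deriv s) x * u x"
          unfolding yd k_def sxh using hx xn by (simp add: field_simps)
        have B: "deriv (deriv s) x * u x + inverse ((s x)\<^sup>2) * v x * deriv s x +
          ((s x)\<^sup>2 * u x * s x - v x * deriv s x) / (s x * s x) = s x * u x + deriv (deriv s) x * u x"
          using sx by (simp add: field_simps power2_eq_square)
        show ?thesis using A B by simp
      qed
    qed
    ultimately show ?thesis by blast
  qed
  have d1: "(y1 has_field_derivative z1 x) (at x) \<and> (z1 has_field_derivative (1 + k x / (x - x0)) * y1 x) (at x)"
    if "x \<in> S" for x
    by (rule gen[OF that, where u=u1 and v=v1]) (use D[OF De[OF that]] in \<open>auto simp: y1_def[abs_def] z1_def[abs_def]\<close>)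
  have d2: "(y2 has_field_derivative z2 x) (at x) \<and> (z2 has_field_derivative (1 + k x / (x - x0)) * y2 x) (at x)"
    if "x \<in> S" for x
    by (rule gen[OF that, where u=u2 and v=v2]) (use D[OF De[OF that]] in \<open>auto simp: y2_def[abs_def] z2_def[abs_def]\<close>)
  have cen: "x0 \<in> ball x0 d" using d by simp
  have holsd: "s holomorphic_on ball x0 d" using hols dsub by (blast intro: holomorphic_on_subset)
  have isos: "isolated_singularity_at s x0"
    by (rule isolated_singularity_at_holomorphic[of _ "ball x0 d"]) (use holsd cen in \<open>auto intro: holomorphic_on_subset\<close>)
  have nes: "not_essential s x0" by (rule not_essential_holomorphic[OF holsd cen]) simp
  have holu1: "u1 holomorphic_on S" by (rule holo_of_deriv) (use D De in blast)
  have holu2: "u2 holomorphic_on S" by (rule holo_of_deriv) (use D De in blast)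
  have isou1: "isolated_singularity_at u1 x0"
    by (rule isolated_singularity_at_holomorphic[of _ "ball x0 d"]) (use holu1 cen in \<open>auto simp: S_def\<close>)
  have isou2: "isolated_singularity_at u2 x0"
    by (rule isolated_singularity_at_holomorphic[of _ "ball x0 d"]) (use holu2 cen in \<open>auto simp: S_def\<close>)
  have ney1: "not_essential y1 x0" unfolding y1_def[abs_def]
    by (rule not_essential_times[OF nes ne1 isos isou1])
  have ney2: "not_essential y2 x0" unfolding y2_def[abs_def]
    by (rule not_essential_times[OF nes ne2 isos isou2])
  obtain L1 where l1: "(y1 \<longlongrightarrow> 0) (at x0)" "(z1 \<longlongrightarrow> L1) (at x0)"
    using key_local[OF d _ _ holk k0 ney1, of z1] d1 unfolding S_def by blast
  obtain L2 where l2: "(y2 \<longlongrightarrow> 0) (at x0)" "(z2 \<longlongrightarrow> L2) (at x0)"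
    using key_local[OF d _ _ holk k0 ney2, of z2] d2 unfolding S_def by blast
  have "((\<lambda>x. y1 x * z2 x - y2 x * z1 x) \<longlongrightarrow> 0 * L2 - 0 * L1) (at x0)"
    by (intro tendsto_intros l1 l2)
  then have W0: "((\<lambda>x. y1 x * z2 x - y2 x * z1 x) \<longlongrightarrow> 0) (at x0)" by simp
  define Dt where "Dt x = u1 x * v2 x - u2 x * v1 x" for x
  have WD: "y1 x * z2 x - y2 x * z1 x = Dt x" if "x \<in> S" for x
    using facts[OF that] by (simp add: y1_def y2_def z1_def z2_def Dt_def field_simps)
  have dD: "(Dt has_field_derivative 0) (at x)" if x: "x \<in> S" for x
  proof -
    have f: "(u1 has_field_derivative inverse ((s x)^2) * v1 x) (at x)"
      "(u2 has_field_derivative inverse ((s x)^2) * v2 x) (at x)"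
      "(v1 has_field_derivative (s x)^2 * u1 x) (at x)"
      "(v2 has_field_derivative (s x)^2 * u2 x) (at x)" using D[OF De[OF x]] by auto
    show ?thesis unfolding Dt_def[abs_def]
      by (rule DERIV_cong[OF DERIV_diff[OF DERIV_mult[OF f(1) f(4)] DERIV_mult[OF f(2) f(3)]]])
         (simp add: algebra_simps)
  qed
  have cD: "continuous_on S Dt"
    using dD by (meson DERIV_isCont continuous_at_imp_continuous_on)
  have conS: "connected S" unfolding S_def by (rule connected_punctured_ball) simp
  obtain C where C: "\<And>x. x \<in> S \<Longrightarrow> Dt x = C"
    using DERIV_zero_connected_constant[OF conS oS finite.emptyI cD] dD by blast
  have pt: "x0 + of_real (d/2) \<in> S" using d by (simp add: S_def dist_norm)
  have "Dt (x0 + of_real (d/2)) \<noteq> 0" unfolding Dt_def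
    using conjunct2[OF conjunct2[OF conjunct2[OF conjunct2[OF D[OF De[OF pt]]]]]] .
  then have C0: "C \<noteq> 0" using C[OF pt] by simp
  have "\<forall>\<^sub>F x in at x0. y1 x * z2 x - y2 x * z1 x = C"
    unfolding eventually_at using d WD C by (intro exI[of _ d]) (auto simp: S_def dist_commute)
  then have "((\<lambda>x. y1 x * z2 x - y2 x * z1 x) \<longlongrightarrow> C) (at x0)"
    by (simp add: tendsto_eventually)
  with W0 have "C = 0" using LIM_unique by blast
  with C0 show False by simp
qed

lemma mult_2_entry: "((A :: complex^2^2) ** B) $ i $ j = A $ i $ 1 * B $ 1 $ j + A $ i $ 2 * B $ 2 $ j"
  by (simp add: matrix_matrix_mult_def sum_2)

lemma srp_intro:
  fixes A :: "complex \<Rightarrow> complex^2^2" and p1 p2 q1 q2 :: "complex \<Rightarrow> complex"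
  assumes e: "e > 0" and A11: "\<And>x. A x $1$1 = 0" and A22: "\<And>x. A x $2$2 = 0"
   and hol12: "(\<lambda>x. A x $1$2) holomorphic_on ball z e - {z}"
   and hol21: "(\<lambda>x. A x $2$1) holomorphic_on ball z e - {z}"
   and D: "\<And>x. x \<in> ball z e - {z} \<Longrightarrow>
      (p1 has_field_derivative A x $1$2 * q1 x) (at x) \<and> (p2 has_field_derivative A x $1$2 * q2 x) (at x) \<and>
      (q1 has_field_derivative A x $2$1 * p1 x) (at x) \<and> (q2 has_field_derivative A x $2$1 * p2 x) (at x) \<and>
      p1 x * q2 x - p2 x * q1 x \<noteq> 0"
   and ne: "not_essential p1 z" "not_essential p2 z" "not_essential q1 z" "not_essential q2 z"
  shows "strong_regular_point A z"
proof -
  define W where "W x = (vector [vector [p1 x, p2 x], vector [q1 x, q2 x]] :: complex^2^2)" for x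
  have W11: "(\<lambda>x. W x $1$1) = p1" and W12: "(\<lambda>x. W x $1$2) = p2"
    and W21: "(\<lambda>x. W x $2$1) = q1" and W22: "(\<lambda>x. W x $2$2) = q2" by (simp_all add: W_def fun_eq_iff)
  have z0: "(\<lambda>x::complex. 0::complex) holomorphic_on ball z e - {z}" by simp
  have h: "\<forall>i j. (\<lambda>x. A x $ i $ j) holomorphic_on ball z e - {z}"
    unfolding forall_2 using A11 A22 hol12 hol21 z0 by simp
  have d: "\<forall>x\<in>ball z e - {z}. det (W x) \<noteq> 0 \<and>
      (\<forall>i j. ((\<lambda>y. W y $ i $ j) has_field_derivative ((A x ** W x) $ i $ j)) (at x))"
  proof
    fix x assume x: "x \<in> ball z e - {z}"
    have "det (W x) \<noteq> 0" using D[OF x] by (simp add: W_def det_2)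
    moreover have "\<forall>i j. ((\<lambda>y. W y $ i $ j) has_field_derivative ((A x ** W x) $ i $ j)) (at x)"
      unfolding forall_2 mult_2_entry W11 W12 W21 W22 using D[OF x] A11 A22
      by (simp add: W_def mult.commute)
    ultimately show "det (W x) \<noteq> 0 \<and> (\<forall>i j. ((\<lambda>y. W y $ i $ j) has_field_derivative ((A x ** W x) $ i $ j)) (at x))"
      by blast
  qed
  have n: "\<forall>i j. not_essential (\<lambda>x. W x $ i $ j) z"
    unfolding forall_2 W11 W12 W21 W22 using ne by simp
  show ?thesis unfolding strong_regular_point_def using e h d n by blast
qed

lemma srp_elim:
  fixes A :: "complex \<Rightarrow> complex^2^2"
  assumes "strong_regular_point A z" and A11: "\<And>x. A x $1$1 = 0" and A22: "\<And>x. A x $2$2 = 0"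
  shows "\<exists>e>0. \<exists>p1 p2 q1 q2. (\<forall>x\<in>ball z e - {z}.
      (p1 has_field_derivative A x $1$2 * q1 x) (at x) \<and> (p2 has_field_derivative A x $1$2 * q2 x) (at x) \<and>
      (q1 has_field_derivative A x $2$1 * p1 x) (at x) \<and> (q2 has_field_derivative A x $2$1 * p2 x) (at x) \<and>
      p1 x * q2 x - p2 x * q1 x \<noteq> 0) \<and>
      not_essential p1 z \<and> not_essential p2 z \<and> not_essential q1 z \<and> not_essential q2 z"
proof -
  obtain e and W :: "complex \<Rightarrow> complex^2^2" where e: "e > 0" and
    d: "\<forall>x\<in>ball z e - {z}. det (W x) \<noteq> 0 \<and>
      (\<forall>i j. ((\<lambda>y. W y $ i $ j) has_field_derivative ((A x ** W x) $ i $ j)) (at x))"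
    and n: "\<forall>i j. not_essential (\<lambda>x. W x $ i $ j) z"
    using assms(1) unfolding strong_regular_point_def by blast
  define p1 where "p1 x = W x $1$1" for x
  define p2 where "p2 x = W x $1$2" for x
  define q1 where "q1 x = W x $2$1" for x
  define q2 where "q2 x = W x $2$2" for x
  have H: "\<forall>x\<in>ball z e - {z}.
      (p1 has_field_derivative A x $1$2 * q1 x) (at x) \<and> (p2 has_field_derivative A x $1$2 * q2 x) (at x) \<and>
      (q1 has_field_derivative A x $2$1 * p1 x) (at x) \<and> (q2 has_field_derivative A x $2$1 * p2 x) (at x) \<and>
      p1 x * q2 x - p2 x * q1 x \<noteq> 0"
  proof
    fix x assume x: "x \<in> ball z e - {z}"
    have dd: "det (W x) \<noteq> 0" and dv: "\<And>i j. ((\<lambda>y. W y $ i $ j) has_field_derivative ((A x ** W x) $ i $ j)) (at x)"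
      using d x by auto
    show "(p1 has_field_derivative A x $1$2 * q1 x) (at x) \<and> (p2 has_field_derivative A x $1$2 * q2 x) (at x) \<and>
      (q1 has_field_derivative A x $2$1 * p1 x) (at x) \<and> (q2 has_field_derivative A x $2$1 * p2 x) (at x) \<and>
      p1 x * q2 x - p2 x * q1 x \<noteq> 0"
      using dv[of 1 1] dv[of 1 2] dv[of 2 1] dv[of 2 2] dd A11[of x] A22[of x]
      unfolding p1_def[abs_def] p2_def[abs_def] q1_def[abs_def] q2_def[abs_def]
      by (simp add: mult_2_entry det_2)
  qed
  have N: "not_essential p1 z \<and> not_essential p2 z \<and> not_essential q1 z \<and> not_essential q2 z"
    using n unfolding p1_def[abs_def] p2_def[abs_def] q1_def[abs_def] q2_def[abs_def] by blast
  show ?thesis using e H N by blast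
qed

lemma der1:
  fixes f :: "complex \<Rightarrow> complex"
  assumes holf: "f holomorphic_on ball z R" and R: "R > 0" and f0: "f z = 0"
    and fr: "\<exists>\<^sub>F w in at z. f w \<noteq> 0" and zo: "zorder f z = 1"
  shows "deriv f z \<noteq> 0"
proof -
  have cen: "z \<in> ball z R" using R by simp
  have iso: "isolated_singularity_at f z"
    by (rule isolated_singularity_at_holomorphic[of f "ball z R"]) (use holf cen in \<open>auto intro: holomorphic_on_subset\<close>)
  have ne: "not_essential f z" by (rule not_essential_holomorphic[OF holf cen]) simp
  define g where "g = zor_poly f z"
  obtain r where g0: "g z \<noteq> 0" and r: "r > 0" and holg: "g holomorphic_on cball z r"
    and eq: "\<And>w. w \<in> cball z r - {z} \<Longrightarrow> f w = g w * (w - z) powi 1 \<and> g w \<noteq> 0"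
    using zorder_exist[OF iso ne fr] zo unfolding g_def by metis
  define d where "d = min r R"
  have d: "d > 0" using r R by (simp add: d_def)
  have feq: "f w = (w - z) * g w" if "w \<in> ball z d" for w
    using that eq[of w] f0 by (cases "w = z") (auto simp: d_def)
  have holgd: "g holomorphic_on ball z d" by (rule holomorphic_on_subset[OF holg]) (auto simp: d_def)
  have cd: "z \<in> ball z d" using d by simp
  have "((\<lambda>w. (w - z) * g w) has_field_derivative 1 * g z + deriv g z * (z - z)) (at z)"
    by (rule DERIV_mult[OF DERIV_diff[OF DERIV_ident DERIV_const, simplified] holomorphic_derivI[OF holgd _ cd]]) simp
  then have "((\<lambda>w. (w - z) * g w) has_field_derivative g z) (at z)" by simp
  then have "(f has_field_derivative g z) (at z)"
    by (rule has_field_derivative_transform_within_open[where S="ball z d"]) (use cd feq in auto)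
  then have "deriv f z = g z" by (rule DERIV_imp_deriv)
  then show ?thesis using g0 by simp
qed

lemma zero_local:
  fixes r :: "complex \<Rightarrow> complex"
  assumes mero: "r nicely_meromorphic_on UNIV"
    and evnz: "\<And>z. \<forall>\<^sub>F x in at z. r x \<noteq> 0"
    and sz: "zorder r z = 1"
    and rz: "r z = 0" and np: "\<not> is_pole r z"
  shows "\<exists>R>0. r holomorphic_on ball z R \<and> deriv r z \<noteq> 0"
proof -
  have "r analytic_on {z}" by (rule nicely_meromorphic_on_imp_analytic_at[OF mero _ np]) simp
  then obtain R where R: "R > 0" and hol: "r holomorphic_on ball z R" unfolding analytic_on_def by blast
  have "deriv r z \<noteq> 0"
    by (rule der1[OF hol R rz]) (use evnz[of z] sz in \<open>auto simp: eventually_frequently\<close>)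
  then show ?thesis using R hol by blast
qed

lemma pole_local:
  fixes r :: "complex \<Rightarrow> complex"
  assumes mero: "r nicely_meromorphic_on UNIV"
    and evnz: "\<And>z. \<forall>\<^sub>F x in at z. r x \<noteq> 0"
    and sp: "zorder r z = -1"
    and p: "is_pole r z"
  shows "\<exists>R>0. (\<lambda>x. inverse (r x)) holomorphic_on ball z R \<and>
         inverse (r z) = 0 \<and> deriv (\<lambda>x. inverse (r x)) z \<noteq> 0 \<and> r z = 0"
proof -
  have rz: "r z = 0" by (rule is_pole_zero_at_nicely_mero[OF mero p]) simp
  define q where "q x = inverse (r x)" for x
  have qm: "q nicely_meromorphic_on UNIV" unfolding q_def[abs_def] by (rule nicely_meromorphic_on_inverse[OF mero])
  have "\<not> is_pole q z" unfolding q_def[abs_def] is_pole_inverse_iff using pole_is_not_zero[OF p] .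
  then have "q analytic_on {z}" by (intro nicely_meromorphic_on_imp_analytic_at[OF qm]) auto
  then obtain R where R: "R > 0" and hol: "q holomorphic_on ball z R" unfolding analytic_on_def by blast
  have rmz: "r meromorphic_on {z}" using mero unfolding nicely_meromorphic_on_def
    by (rule meromorphic_on_subset[OF conjunct1]) simp
  have fr: "\<exists>\<^sub>F w in at z. r w \<noteq> 0" using evnz[of z] by (auto simp: eventually_frequently)
  have "zorder q z = - zorder r z" unfolding q_def[abs_def]
    by (rule zorder_inverse) (use rmz fr in \<open>auto simp: meromorphic_at_iff\<close>)
  then have zq: "zorder q z = 1" using sp by simp
  have frq: "\<exists>\<^sub>F w in at z. q w \<noteq> 0" using evnz[of z] by (auto simp: eventually_frequently q_def)
  have "deriv q z \<noteq> 0" by (rule der1[OF hol R _ frq zq]) (simp add: q_def rz)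
  then show ?thesis using R hol rz unfolding q_def[abs_def] by auto
qed

theorem theorem6p1:
  fixes r :: "complex \<Rightarrow> complex"
  assumes mero: "r nicely_meromorphic_on UNIV"
    and nonzero: "\<exists>x. r x \<noteq> 0"
    and simple_zeros: "\<And>x. r x = 0 \<Longrightarrow> \<not> is_pole r x \<Longrightarrow> zorder r x = 1"
    and simple_poles: "\<And>y. is_pole r y \<Longrightarrow> zorder r y = -1"
  shows "(\<forall>\<rho>::complex. \<forall>z. (r z = 0 \<or> is_pole r z) \<longrightarrow> strong_regular_point (sysA r \<rho>) z)
     \<longleftrightarrow> ((\<forall>x. r x = 0 \<and> \<not> is_pole r x \<longrightarrow> deriv (deriv r) x = 0) \<and>
          (\<forall>y. is_pole r y \<longrightarrow> deriv (deriv (\<lambda>x. inverse (r x))) y = 0))"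
proof -
  have evnz: "\<forall>\<^sub>F x in at z. r x \<noteq> 0" for z
  proof -
    have "(\<forall>x\<in>UNIV. r x = 0) \<or> (\<forall>\<^sub>\<approx>x\<in>UNIV. r x \<noteq> 0)"
      by (rule nicely_meromorphic_imp_constant_or_avoid[OF mero open_UNIV connected_UNIV])
    then have "\<forall>\<^sub>\<approx>x\<in>UNIV. r x \<noteq> 0" using nonzero by auto
    then show ?thesis by (rule eventually_cosparse_imp_eventually_at) simp
  qed
  have ZL: "\<exists>R>0. r holomorphic_on ball z R \<and> deriv r z \<noteq> 0" if "r z = 0" "\<not> is_pole r z" for z
    by (rule zero_local[OF mero evnz simple_zeros[OF that] that])
  have PL: "\<exists>R>0. (\<lambda>x. inverse (r x)) holomorphic_on ball z R \<and>
         inverse (r z) = 0 \<and> deriv (\<lambda>x. inverse (r x)) z \<noteq> 0 \<and> r z = 0" if "is_pole r z" for z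
    by (rule pole_local[OF mero evnz simple_poles[OF that] that])
  have A11: "\<And>\<rho> x. sysA r \<rho> x $1$1 = 0" and A22: "\<And>\<rho> x. sysA r \<rho> x $2$2 = 0"
    and A12: "\<And>\<rho> x. sysA r \<rho> x $1$2 = \<rho> * inverse ((r x)^2)"
    and A21: "\<And>\<rho> x. sysA r \<rho> x $2$1 = \<rho> * (r x)^2" by (simp_all add: sysA_def)
  show ?thesis
  proof
    assume H: "\<forall>\<rho>::complex. \<forall>z. (r z = 0 \<or> is_pole r z) \<longrightarrow> strong_regular_point (sysA r \<rho>) z"
    have C1: "deriv (deriv r) x = 0" if rx: "r x = 0" and np: "\<not> is_pole r x" for x
    proof -
      obtain R where R: "R > 0" and hol: "r holomorphic_on ball x R" and d1: "deriv r x \<noteq> 0"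
        using ZL[OF rx np] by blast
      obtain e p1 p2 q1 q2 where e: "e > 0" and
        D: "\<forall>y\<in>ball x e - {x}.
          (p1 has_field_derivative sysA r 1 y $1$2 * q1 y) (at y) \<and> (p2 has_field_derivative sysA r 1 y $1$2 * q2 y) (at y) \<and>
          (q1 has_field_derivative sysA r 1 y $2$1 * p1 y) (at y) \<and> (q2 has_field_derivative sysA r 1 y $2$1 * p2 y) (at y) \<and>
          p1 y * q2 y - p2 y * q1 y \<noteq> 0"
        and ne: "not_essential p1 x" "not_essential p2 x" "not_essential q1 x" "not_essential q2 x"
        using srp_elim[OF H[rule_format, of x 1] A11 A22] rx by blast
      show ?thesis
        by (rule sys_nec[OF hol R rx d1 e _ ne(1,2), of q1 q2]) (use D in \<open>simp add: A12 A21\<close>)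
    qed
    have C2: "deriv (deriv (\<lambda>x. inverse (r x))) x = 0" if p: "is_pole r x" for x
    proof -
      obtain R where R: "R > 0" and hol: "(\<lambda>x. inverse (r x)) holomorphic_on ball x R"
        and iz: "inverse (r x) = 0" and d1: "deriv (\<lambda>x. inverse (r x)) x \<noteq> 0" and rx: "r x = 0"
        using PL[OF p] by blast
      obtain e p1 p2 q1 q2 where e: "e > 0" and
        D: "\<forall>y\<in>ball x e - {x}.
          (p1 has_field_derivative sysA r 1 y $1$2 * q1 y) (at y) \<and> (p2 has_field_derivative sysA r 1 y $1$2 * q2 y) (at y) \<and>
          (q1 has_field_derivative sysA r 1 y $2$1 * p1 y) (at y) \<and> (q2 has_field_derivative sysA r 1 y $2$1 * p2 y) (at y) \<and>
          p1 y * q2 y - p2 y * q1 y \<noteq> 0"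
        and ne: "not_essential p1 x" "not_essential p2 x" "not_essential q1 x" "not_essential q2 x"
        using srp_elim[OF H[rule_format, of x 1] A11 A22] p by blast
      show ?thesis
      proof (rule sys_nec[OF hol R iz d1 e _ ne(3,4), of p1 p2])
        fix y assume y: "y \<in> ball x e - {x}"
        have "p1 y * q2 y - p2 y * q1 y \<noteq> 0" using D y by blast
        then have det: "q1 y * p2 y - q2 y * p1 y \<noteq> 0" by (simp add: algebra_simps)
        show "(q1 has_field_derivative inverse ((inverse (r y))\<^sup>2) * p1 y) (at y) \<and>
          (q2 has_field_derivative inverse ((inverse (r y))\<^sup>2) * p2 y) (at y) \<and>
          (p1 has_field_derivative (inverse (r y))\<^sup>2 * q1 y) (at y) \<and>
          (p2 has_field_derivative (inverse (r y))\<^sup>2 * q2 y) (at y) \<and>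
          q1 y * p2 y - q2 y * p1 y \<noteq> 0"
          using D y det by (simp add: A12 A21 power_inverse)
      qed
    qed
    show "(\<forall>x. r x = 0 \<and> \<not> is_pole r x \<longrightarrow> deriv (deriv r) x = 0) \<and>
          (\<forall>y. is_pole r y \<longrightarrow> deriv (deriv (\<lambda>x. inverse (r x))) y = 0)"
      using C1 C2 by blast
  next
    assume conds: "(\<forall>x. r x = 0 \<and> \<not> is_pole r x \<longrightarrow> deriv (deriv r) x = 0) \<and>
          (\<forall>y. is_pole r y \<longrightarrow> deriv (deriv (\<lambda>x. inverse (r x))) y = 0)"
    show "\<forall>\<rho>::complex. \<forall>z. (r z = 0 \<or> is_pole r z) \<longrightarrow> strong_regular_point (sysA r \<rho>) z"
    proof (intro allI impI)
      fix \<rho> :: complex and z assume zz: "r z = 0 \<or> is_pole r z"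
      show "strong_regular_point (sysA r \<rho>) z"
      proof (cases "\<rho> = 0")
        case True
        show ?thesis
        proof (rule srp_intro[where e=1 and ?p1.0="\<lambda>_. 1" and ?p2.0="\<lambda>_. 0" and ?q1.0="\<lambda>_. 0" and ?q2.0="\<lambda>_. 1"])
          show "(\<lambda>x. sysA r \<rho> x $ 1 $ 2) holomorphic_on ball z 1 - {z}" using True by (simp add: A12)
          show "(\<lambda>x. sysA r \<rho> x $ 2 $ 1) holomorphic_on ball z 1 - {z}" using True by (simp add: A21)
        qed (use True in \<open>auto simp: A11 A22 A12 A21 intro: not_essential_const\<close>)
      next
        case rho: False
        show ?thesis
        proof (cases "is_pole r z")
          case False
          then have rz: "r z = 0" using zz by simp
          obtain R where R: "R > 0" and hol: "r holomorphic_on ball z R" and d1: "deriv r z \<noteq> 0"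
            using ZL[OF rz False] by blast
          have d2: "deriv (deriv r) z = 0" using conds rz False by blast
          obtain e u1 u2 v1 v2 where e: "e > 0" and
            D: "\<forall>x\<in>ball z e - {z}. r x \<noteq> 0 \<and>
              (u1 has_field_derivative \<rho> * inverse ((r x)^2) * v1 x) (at x) \<and>
              (u2 has_field_derivative \<rho> * inverse ((r x)^2) * v2 x) (at x) \<and>
              (v1 has_field_derivative \<rho> * (r x)^2 * u1 x) (at x) \<and>
              (v2 has_field_derivative \<rho> * (r x)^2 * u2 x) (at x) \<and>
              u1 x * v2 x - u2 x * v1 x \<noteq> 0"
            and ne: "not_essential u1 z" "not_essential u2 z" "not_essential v1 z" "not_essential v2 z"
            using sys_exists[OF hol R rz d1 d2 rho] by blast
          define e' where "e' = min e R"
          have e': "e' > 0" using e R by (simp add: e'_def)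
          have sub: "ball z e' - {z} \<subseteq> ball z e - {z}" "ball z e' - {z} \<subseteq> ball z R" by (auto simp: e'_def)
          have holr: "r holomorphic_on ball z e' - {z}" by (rule holomorphic_on_subset[OF hol sub(2)])
          have nz: "\<And>x. x \<in> ball z e' - {z} \<Longrightarrow> r x \<noteq> 0" using D sub(1) by blast
          show ?thesis
          proof (rule srp_intro[OF e' A11 A22 _ _ _ ne])
            show "(\<lambda>x. sysA r \<rho> x $ 1 $ 2) holomorphic_on ball z e' - {z}"
              unfolding A12 using holr nz by (intro holomorphic_intros) auto
            show "(\<lambda>x. sysA r \<rho> x $ 2 $ 1) holomorphic_on ball z e' - {z}"
              unfolding A21 using holr by (intro holomorphic_intros) auto
            fix x assume "x \<in> ball z e' - {z}"
            then have "x \<in> ball z e - {z}" using sub by blast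
            then show "(u1 has_field_derivative sysA r \<rho> x $ 1 $ 2 * v1 x) (at x) \<and>
              (u2 has_field_derivative sysA r \<rho> x $ 1 $ 2 * v2 x) (at x) \<and>
              (v1 has_field_derivative sysA r \<rho> x $ 2 $ 1 * u1 x) (at x) \<and>
              (v2 has_field_derivative sysA r \<rho> x $ 2 $ 1 * u2 x) (at x) \<and>
              u1 x * v2 x - u2 x * v1 x \<noteq> 0" using D by (simp add: A12 A21)
          qed
        next
          case True
          obtain R where R: "R > 0" and hol: "(\<lambda>x. inverse (r x)) holomorphic_on ball z R"
            and iz: "inverse (r z) = 0" and d1: "deriv (\<lambda>x. inverse (r x)) z \<noteq> 0" and rz: "r z = 0"
            using PL[OF True] by blast
          have d2: "deriv (deriv (\<lambda>x. inverse (r x))) z = 0" using conds True by blast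
          obtain e u1 u2 v1 v2 where e: "e > 0" and
            D: "\<forall>x\<in>ball z e - {z}. inverse (r x) \<noteq> 0 \<and>
              (u1 has_field_derivative \<rho> * inverse ((inverse (r x))^2) * v1 x) (at x) \<and>
              (u2 has_field_derivative \<rho> * inverse ((inverse (r x))^2) * v2 x) (at x) \<and>
              (v1 has_field_derivative \<rho> * (inverse (r x))^2 * u1 x) (at x) \<and>
              (v2 has_field_derivative \<rho> * (inverse (r x))^2 * u2 x) (at x) \<and>
              u1 x * v2 x - u2 x * v1 x \<noteq> 0"
            and ne: "not_essential u1 z" "not_essential u2 z" "not_essential v1 z" "not_essential v2 z"
            using sys_exists[OF hol R iz d1 d2 rho] by blast
          define e' where "e' = min e R"
          have e': "e' > 0" using e R by (simp add: e'_def)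
          have sub: "ball z e' - {z} \<subseteq> ball z e - {z}" "ball z e' - {z} \<subseteq> ball z R" by (auto simp: e'_def)
          have holq: "(\<lambda>x. inverse (r x)) holomorphic_on ball z e' - {z}" by (rule holomorphic_on_subset[OF hol sub(2)])
          have nz: "\<And>x. x \<in> ball z e' - {z} \<Longrightarrow> inverse (r x) \<noteq> 0" using D sub(1) by blast
          show ?thesis
          proof (rule srp_intro[OF e' A11 A22 _ _ _ ne(3,4,1,2)])
            have "(\<lambda>x. \<rho> * (inverse (r x))^2) holomorphic_on ball z e' - {z}"
              by (intro holomorphic_on_mult holomorphic_on_const holomorphic_on_power holq)
            then show "(\<lambda>x. sysA r \<rho> x $ 1 $ 2) holomorphic_on ball z e' - {z}"
              unfolding A12 by (rule holomorphic_transform) (simp add: power_inverse)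
            have "(\<lambda>x. \<rho> * inverse ((inverse (r x))^2)) holomorphic_on ball z e' - {z}"
              by (rule holomorphic_on_mult[OF holomorphic_on_const holomorphic_on_inverse[OF holomorphic_on_power[OF holq]]])
                 (use nz in auto)
            then show "(\<lambda>x. sysA r \<rho> x $ 2 $ 1) holomorphic_on ball z e' - {z}"
              unfolding A21 by (rule holomorphic_transform) (simp add: power_inverse)
            fix x assume "x \<in> ball z e' - {z}"
            then have x: "x \<in> ball z e - {z}" using sub by blast
            have Dx: "u1 x * v2 x - u2 x * v1 x \<noteq> 0" using D x by blast
            have "v1 x * u2 x - v2 x * u1 x \<noteq> 0"
            proof
              assume "v1 x * u2 x - v2 x * u1 x = 0"
              then have "u1 x * v2 x - u2 x * v1 x = 0" by (simp add: algebra_simps)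
              with Dx show False by simp
            qed
            then show "(v1 has_field_derivative sysA r \<rho> x $ 1 $ 2 * u1 x) (at x) \<and>
              (v2 has_field_derivative sysA r \<rho> x $ 1 $ 2 * u2 x) (at x) \<and>
              (u1 has_field_derivative sysA r \<rho> x $ 2 $ 1 * v1 x) (at x) \<and>
              (u2 has_field_derivative sysA r \<rho> x $ 2 $ 1 * v2 x) (at x) \<and>
              v1 x * u2 x - v2 x * u1 x \<noteq> 0" using D x by (simp add: A12 A21 power_inverse)
          qed
        qed
      qed
    qed
  qed
qed

end
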